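(* Let $\mathcal{X}=\{1,\dots,n\}$, let $\pi$ be a strictly positive probability distribution on $\mathcal{X}$, let $P$ be a transition matrix with $\pi P=\pi$, let $2\le k\le n$ and $\alpha\in[0,1]$. For a partition $(\mathcal{O}_i)_{i=1}^k$ of $\mathcal{X}$ into nonempty proper subsets let $A_\alpha=\alpha P+(1-\alpha)G$ with $G$ its Gibbs kernel. Then $$\min_{\mathcal{O}_1,\dots,\mathcal{O}_k}\mathrm{KL}_\pi(A_\alpha\|\Pi)\le\alpha\,\mathrm{KL}_\pi(P\|\Pi)-(1-\alpha)\Big(\sum_{i=1}^{k-1}\pi(i)\log\pi(i)+\Big(\sum_{j=k}^n\pi(j)\Big)\log\sum_{j=k}^n\pi(j)\Big).$$
   Context: Gibbs kernel: $G(x,y)=\pi(y)/\pi(\mathcal{O}(x))$ if $y\in\mathcal{O}(x)$ and $0$ otherwise, $\mathcal{O}(x)$ the block containing $x$, $\pi(\mathcal{O})=\sum_{z\in\mathcal{O}}\pi(z)$. $\Pi$ is the matrix with every row equal to $\pi$. $\mathrm{KL}_\pi(P\|Q)=\sum_{x,y}\pi(x)P(x,y)\log\frac{P(x,y)}{Q(x,y)}$ with $0\log(0/a)=0$. *)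

theory Defs
  imports "HOL-Library.Disjoint_Sets" Complex_Main
begin

text \<open>State space X = {1..n}; distributions and kernels are real-valued functions on nat,
  only their values on {1..n} matter.\<close>

definition block :: "nat set set \<Rightarrow> nat \<Rightarrow> nat set" where
  "block Os x = (THE B. B \<in> Os \<and> x \<in> B)"

definition gibbs :: "(nat \<Rightarrow> real) \<Rightarrow> nat set set \<Rightarrow> nat \<Rightarrow> nat \<Rightarrow> real" where
  "gibbs \<pi> Os x y = (if y \<in> block Os x then \<pi> y / (\<Sum>z\<in>block Os x. \<pi> z) else 0)"

definition Pi_mat :: "(nat \<Rightarrow> real) \<Rightarrow> nat \<Rightarrow> nat \<Rightarrow> real" where
  "Pi_mat \<pi> x y = \<pi> y"

definition KL :: "nat \<Rightarrow> (nat \<Rightarrow> real) \<Rightarrow> (nat \<Rightarrow> nat \<Rightarrow> real) \<Rightarrow> (nat \<Rightarrow> nat \<Rightarrow> real) \<Rightarrow> real" where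
  "KL n \<pi> P Q = (\<Sum>x\<in>{1..n}. \<Sum>y\<in>{1..n}.
      (if P x y = 0 then 0 else \<pi> x * P x y * ln (P x y / Q x y)))"

definition transition_matrix :: "nat \<Rightarrow> (nat \<Rightarrow> nat \<Rightarrow> real) \<Rightarrow> bool" where
  "transition_matrix n P \<longleftrightarrow> (\<forall>x\<in>{1..n}. (\<forall>y\<in>{1..n}. P x y \<ge> 0) \<and> (\<Sum>y\<in>{1..n}. P x y) = 1)"

end

theory Submission
  imports Defs
begin

definition fkl :: "real \<Rightarrow> real \<Rightarrow> real" where
  "fkl q t = (if t = 0 then 0 else t * ln (t / q))"

lemma tln_ge: assumes "t \<ge> 0" "c > 0" shows "fkl c t \<ge> t - c"
proof (cases "t = 0")
  case True then show ?thesis using assms by (simp add: fkl_def)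
next
  case False
  then have t: "t > 0" using assms by simp
  have "ln (c/t) \<le> c/t - 1" using ln_le_minus_one[of "c/t"] t assms by simp
  moreover have "ln (t/c) = - ln (c/t)" using t assms by (simp add: ln_div)
  ultimately have "ln (t/c) \<ge> 1 - c/t" by simp
  then have "t * ln (t/c) \<ge> t * (1 - c/t)" using t by (simp add: mult_left_mono)
  also have "t * (1 - c/t) = t - c" using t by (simp add: field_simps)
  finally show ?thesis using False by (simp add: fkl_def)
qed

lemma fkl_shift: assumes "t \<ge> 0" "c > 0" "q > 0"
  shows "fkl q t = fkl c t + t * ln (c / q)"
proof (cases "t = 0")
  case True then show ?thesis by (simp add: fkl_def)
next
  case False
  then have "t > 0" using assms by simp
  then have "ln (t/q) = ln (t/c) + ln (c/q)" using assms by (simp add: ln_div)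
  then show ?thesis using False by (simp add: fkl_def algebra_simps)
qed

lemma fkl_conv:
  fixes a b q \<alpha> :: real
  assumes a: "a \<ge> 0" and b: "b \<ge> 0" and q: "q > 0" and al: "0 \<le> \<alpha>" "\<alpha> \<le> 1"
  shows "fkl q (\<alpha>*a + (1-\<alpha>)*b) \<le> \<alpha> * fkl q a + (1-\<alpha>) * fkl q b"
proof -
  define c where "c = \<alpha>*a + (1-\<alpha>)*b"
  have c0: "c \<ge> 0" using a b al by (simp add: c_def)
  show ?thesis
  proof (cases "c = 0")
    case True
    then have "\<alpha>*a = 0" "(1-\<alpha>)*b = 0" using a b al c_def
      by (smt (verit, ccfv_threshold) mult_nonneg_nonneg)+
    then have "\<alpha> * fkl q a = 0" "(1-\<alpha>) * fkl q b = 0" by (auto simp: fkl_def)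
    moreover have "fkl q (\<alpha>*a + (1-\<alpha>)*b) = 0" using True by (simp add: c_def[symmetric] fkl_def)
    ultimately show ?thesis by linarith
  next
    case False
    then have cp: "c > 0" using c0 by simp
    have "\<alpha> * fkl q a + (1-\<alpha>) * fkl q b
        = \<alpha> * fkl c a + (1-\<alpha>) * fkl c b + c * ln (c/q)"
      using fkl_shift[OF a cp q] fkl_shift[OF b cp q] by (simp add: c_def algebra_simps)
    also have "\<dots> \<ge> \<alpha> * (a - c) + (1-\<alpha>) * (b - c) + c * ln (c/q)"
      using tln_ge[OF a cp] tln_ge[OF b cp] al
      by (smt (verit) mult_left_mono)
    finally have "\<alpha> * fkl q a + (1-\<alpha>) * fkl q b \<ge> c * ln (c/q)"
      by (simp add: c_def algebra_simps)
    then show ?thesis using False by (simp add: c_def[symmetric] fkl_def)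
  qed
qed

lemma KL_fkl: "KL n \<pi> P (Pi_mat \<pi>) = (\<Sum>x\<in>{1..n}. \<Sum>y\<in>{1..n}. \<pi> x * fkl (\<pi> y) (P x y))"
  unfolding KL_def fkl_def Pi_mat_def by (intro sum.cong refl) auto

lemma KL_conv:
  assumes pos: "\<forall>x\<in>{1..n}. \<pi> x > 0"
    and P: "\<forall>x\<in>{1..n}. \<forall>y\<in>{1..n}. P x y \<ge> 0"
    and G: "\<forall>x\<in>{1..n}. \<forall>y\<in>{1..n}. G x y \<ge> 0"
    and al: "0 \<le> \<alpha>" "\<alpha> \<le> 1"
  shows "KL n \<pi> (\<lambda>x y. \<alpha> * P x y + (1 - \<alpha>) * G x y) (Pi_mat \<pi>)
     \<le> \<alpha> * KL n \<pi> P (Pi_mat \<pi>) + (1-\<alpha>) * KL n \<pi> G (Pi_mat \<pi>)"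
proof -
  have "KL n \<pi> (\<lambda>x y. \<alpha> * P x y + (1 - \<alpha>) * G x y) (Pi_mat \<pi>)
     \<le> (\<Sum>x\<in>{1..n}. \<Sum>y\<in>{1..n}. \<alpha> * (\<pi> x * fkl (\<pi> y) (P x y)) + (1-\<alpha>) * (\<pi> x * fkl (\<pi> y) (G x y)))"
    unfolding KL_fkl
  proof (intro sum_mono)
    fix x y assume x: "x \<in> {1..n}" and y: "y \<in> {1..n}"
    have "fkl (\<pi> y) (\<alpha> * P x y + (1 - \<alpha>) * G x y) \<le> \<alpha> * fkl (\<pi> y) (P x y) + (1-\<alpha>) * fkl (\<pi> y) (G x y)"
      using fkl_conv[of "P x y" "G x y" "\<pi> y" \<alpha>] x y P G pos al by auto
    from mult_left_mono[OF this, of "\<pi> x"] show "\<pi> x * fkl (\<pi> y) (\<alpha> * P x y + (1 - \<alpha>) * G x y)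
         \<le> \<alpha> * (\<pi> x * fkl (\<pi> y) (P x y)) + (1 - \<alpha>) * (\<pi> x * fkl (\<pi> y) (G x y))"
      using pos x by (simp add: algebra_simps less_imp_le)
  qed
  also have "\<dots> = \<alpha> * KL n \<pi> P (Pi_mat \<pi>) + (1-\<alpha>) * KL n \<pi> G (Pi_mat \<pi>)"
    unfolding KL_fkl by (simp add: sum.distrib sum_distrib_left)
  finally show ?thesis .
qed

definition Os0 :: "nat \<Rightarrow> nat \<Rightarrow> nat set set" where
  "Os0 n k = (\<lambda>i. {i}) ` {1..k-1} \<union> {{k..n}}"

definition Ob :: "nat \<Rightarrow> nat \<Rightarrow> nat \<Rightarrow> nat set" where
  "Ob n k x = (if x < k then {x} else {k..n})"

lemma Os0_part: assumes "2 \<le> k" "k \<le> n" shows "partition_on {1..n} (Os0 n k)"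
  unfolding partition_on_def disjoint_def Os0_def using assms by auto

lemma Os0_card: assumes "2 \<le> k" "k \<le> n" shows "card (Os0 n k) = k"
proof -
  have nin: "{k..n} \<notin> (\<lambda>i. {i}) ` {1..k-1}"
  proof
    assume "{k..n} \<in> (\<lambda>i. {i}) ` {1..k-1}"
    then obtain i where i: "i \<in> {1..k-1}" "{k..n} = {i}" by blast
    have "k \<in> {k..n}" using assms by simp
    then have "k \<in> {i}" using i(2) by blast
    then have "k = i" by blast
    then show False using i(1) assms by simp
  qed
  have c: "card ((\<lambda>i. {i}) ` {1..k-1}) = k - 1"
    by (subst card_image) (auto simp: inj_on_def)
  have e: "Os0 n k = insert {k..n} ((\<lambda>i. {i}) ` {1..k-1})" by (simp add: Os0_def)
  have "card (Os0 n k) = Suc (k - 1)" unfolding e using nin c by (subst card_insert_disjoint) auto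
  then show ?thesis using assms by simp
qed

lemma Os0_blocks: assumes "2 \<le> k" "k \<le> n" shows "\<forall>B\<in>Os0 n k. B \<noteq> {} \<and> B \<subset> {1..n}"
proof
  fix B assume B: "B \<in> Os0 n k"
  show "B \<noteq> {} \<and> B \<subset> {1..n}"
  proof (cases "B = {k..n}")
    case True
    have a1: "1 \<notin> B" "1 \<in> {1..n}" using assms True by auto
    have a2: "k \<in> B" using assms True by simp
    have a3: "B \<subseteq> {1..n}" using assms True by simp
    show ?thesis using a1 a2 a3 by blast
  next
    case False
    then have "B \<in> (\<lambda>i. {i}) ` {1..k-1}" using B by (simp add: Os0_def)
    then obtain i where i: "B = {i}" "i \<in> {1..k-1}" by blast
    then have "n \<noteq> i" using assms by (simp del: One_nat_def) arith
    then have a1: "n \<notin> B" "n \<in> {1..n}" using i assms by auto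
    have a2: "i \<in> B" using i by simp
    have a3: "B \<subseteq> {1..n}" using assms i by auto
    show ?thesis using a1 a2 a3 by blast
  qed
qed

lemma Os0_block: assumes "2 \<le> k" "k \<le> n" "x \<in> {1..n}" shows "block (Os0 n k) x = Ob n k x"
  unfolding block_def
proof (rule the_equality)
  show "Ob n k x \<in> Os0 n k \<and> x \<in> Ob n k x" using assms unfolding Ob_def Os0_def by auto
  fix B assume "B \<in> Os0 n k \<and> x \<in> B"
  then show "B = Ob n k x" using assms unfolding Ob_def Os0_def by auto
qed

lemma KL_gibbs:
  assumes pos: "\<forall>x\<in>{1..n}. \<pi> x > 0" and k: "2 \<le> k" "k \<le> n"
  shows "KL n \<pi> (gibbs \<pi> (Os0 n k)) (Pi_mat \<pi>) =
     - ((\<Sum>i=1..k-1. \<pi> i * ln (\<pi> i)) + (\<Sum>j=k..n. \<pi> j) * ln (\<Sum>j=k..n. \<pi> j))"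
proof -
  define s where "s x = (\<Sum>z\<in>Ob n k x. \<pi> z)" for x
  have inner: "(\<Sum>y\<in>{1..n}. \<pi> x * fkl (\<pi> y) (gibbs \<pi> (Os0 n k) x y)) = - (\<pi> x * ln (s x))"
    if x: "x \<in> {1..n}" for x
  proof -
    have sub: "Ob n k x \<subseteq> {1..n}" using x k by (auto simp: Ob_def)
    have ne: "Ob n k x \<noteq> {}" using x k by (auto simp: Ob_def)
    have fin: "finite (Ob n k x)" by (auto simp: Ob_def)
    have sp: "s x > 0" unfolding s_def using sub ne fin pos
      by (intro sum_pos) auto
    have g: "gibbs \<pi> (Os0 n k) x y = (if y \<in> Ob n k x then \<pi> y / s x else 0)" for y
      using Os0_block[OF k x] by (simp add: gibbs_def s_def)
    have "(\<Sum>y\<in>{1..n}. \<pi> x * fkl (\<pi> y) (gibbs \<pi> (Os0 n k) x y))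
        = (\<Sum>y\<in>Ob n k x. \<pi> x * fkl (\<pi> y) (gibbs \<pi> (Os0 n k) x y))"
      using sub by (intro sum.mono_neutral_right) (auto simp: g fkl_def)
    also have "\<dots> = (\<Sum>y\<in>Ob n k x. (\<pi> x * ln (1 / s x) / s x) * \<pi> y)"
    proof (intro sum.cong refl)
      fix y assume y: "y \<in> Ob n k x"
      then have "\<pi> y > 0" using sub pos by auto
      then show "\<pi> x * fkl (\<pi> y) (gibbs \<pi> (Os0 n k) x y) = (\<pi> x * ln (1 / s x) / s x) * \<pi> y"
        using y sp by (simp add: g fkl_def)
    qed
    also have "\<dots> = (\<pi> x * ln (1 / s x) / s x) * s x" by (simp only: sum_distrib_left[symmetric] s_def)
    also have "\<dots> = - (\<pi> x * ln (s x))" using sp by (simp add: ln_div)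
    finally show ?thesis .
  qed
  have E1: "KL n \<pi> (gibbs \<pi> (Os0 n k)) (Pi_mat \<pi>) = (\<Sum>x\<in>{1..n}. - (\<pi> x * ln (s x)))"
    unfolding KL_fkl by (intro sum.cong refl inner)
  have E2: "(\<Sum>x\<in>{1..n}. - (\<pi> x * ln (s x))) = (\<Sum>x\<in>{1..k-1}. - (\<pi> x * ln (s x))) + (\<Sum>x\<in>{k..n}. - (\<pi> x * ln (s x)))"
  proof -
    have e: "{1..n} = {1..k-1} \<union> {k..n}" using k by auto
    show ?thesis unfolding e by (rule sum.union_disjoint) auto
  qed
  have E3: "(\<Sum>x\<in>{1..k-1}. - (\<pi> x * ln (s x))) = - (\<Sum>i=1..k-1. \<pi> i * ln (\<pi> i))"
  proof -
    have "s x = \<pi> x" if "x \<in> {1..k-1}" for x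
    proof -
      have "x < k" using that k by auto
      then show ?thesis by (simp add: s_def Ob_def)
    qed
    then have "\<And>x. x \<in> {1..k-1} \<Longrightarrow> \<pi> x * ln (s x) = \<pi> x * ln (\<pi> x)" by metis
    then have "(\<Sum>x\<in>{1..k-1}. \<pi> x * ln (s x)) = (\<Sum>i=1..k-1. \<pi> i * ln (\<pi> i))"
      by (rule sum.cong[OF refl])
    then show ?thesis unfolding sum_negf by (rule arg_cong)
  qed
  have E4: "(\<Sum>x\<in>{k..n}. - (\<pi> x * ln (s x))) = - ((\<Sum>j=k..n. \<pi> j) * ln (\<Sum>j=k..n. \<pi> j))"
  proof -
    have "s x = (\<Sum>j=k..n. \<pi> j)" if "x \<in> {k..n}" for x
    proof -
      have "\<not> x < k" using that by auto
      then show ?thesis by (simp add: s_def Ob_def)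
    qed
    then have "\<And>x. x \<in> {k..n} \<Longrightarrow> \<pi> x * ln (s x) = \<pi> x * ln (\<Sum>j=k..n. \<pi> j)" by metis
    then have "(\<Sum>x\<in>{k..n}. \<pi> x * ln (s x)) = (\<Sum>x\<in>{k..n}. \<pi> x * ln (\<Sum>j=k..n. \<pi> j))"
      by (rule sum.cong[OF refl])
    also have "\<dots> = (\<Sum>j=k..n. \<pi> j) * ln (\<Sum>j=k..n. \<pi> j)" by (rule sum_distrib_right[symmetric])
    finally show ?thesis unfolding sum_negf by (rule arg_cong)
  qed
  show ?thesis unfolding E1 E2 E3 E4 by simp
qed

theorem corollary5p5:
  fixes n k :: nat and \<pi> :: "nat \<Rightarrow> real" and P :: "nat \<Rightarrow> nat \<Rightarrow> real" and \<alpha> :: real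
  assumes pos: "\<forall>x\<in>{1..n}. \<pi> x > 0"
    and prob: "(\<Sum>x\<in>{1..n}. \<pi> x) = 1"
    and trans: "transition_matrix n P"
    and stat: "\<forall>y\<in>{1..n}. (\<Sum>x\<in>{1..n}. \<pi> x * P x y) = \<pi> y"
    and k: "2 \<le> k" "k \<le> n"
    and alpha: "0 \<le> \<alpha>" "\<alpha> \<le> 1"
  shows "Min {KL n \<pi> (\<lambda>x y. \<alpha> * P x y + (1 - \<alpha>) * gibbs \<pi> Os x y) (Pi_mat \<pi>) | Os.
              partition_on {1..n} Os \<and> card Os = k \<and> (\<forall>B\<in>Os. B \<noteq> {} \<and> B \<subset> {1..n})}
         \<le> \<alpha> * KL n \<pi> P (Pi_mat \<pi>)
           - (1 - \<alpha>) * ((\<Sum>i=1..k-1. \<pi> i * ln (\<pi> i))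
                        + (\<Sum>j=k..n. \<pi> j) * ln (\<Sum>j=k..n. \<pi> j))"
proof -
  let ?f = "\<lambda>Os. KL n \<pi> (\<lambda>x y. \<alpha> * P x y + (1 - \<alpha>) * gibbs \<pi> Os x y) (Pi_mat \<pi>)"
  let ?S = "{?f Os | Os. partition_on {1..n} Os \<and> card Os = k \<and> (\<forall>B\<in>Os. B \<noteq> {} \<and> B \<subset> {1..n})}"
  have "?S \<subseteq> ?f ` Pow (Pow {1..n})"
    by (auto simp: partition_on_def)
  then have fin: "finite ?S" by (rule finite_subset) auto
  have mem: "?f (Os0 n k) \<in> ?S" using Os0_part[OF k] Os0_card[OF k] Os0_blocks[OF k] by blast
  have "Min ?S \<le> ?f (Os0 n k)" using fin mem by (rule Min_le)
  also have "\<dots> \<le> \<alpha> * KL n \<pi> P (Pi_mat \<pi>) + (1-\<alpha>) * KL n \<pi> (gibbs \<pi> (Os0 n k)) (Pi_mat \<pi>)"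
  proof (rule KL_conv[OF pos _ _ alpha])
    show "\<forall>x\<in>{1..n}. \<forall>y\<in>{1..n}. P x y \<ge> 0" using trans by (simp add: transition_matrix_def)
    show "\<forall>x\<in>{1..n}. \<forall>y\<in>{1..n}. gibbs \<pi> (Os0 n k) x y \<ge> 0"
    proof (intro ballI)
      fix x y assume x: "x \<in> {1..n}" and y: "y \<in> {1..n}"
      have "Ob n k x \<subseteq> {1..n}" using x k by (auto simp: Ob_def)
      then have "(\<Sum>z\<in>Ob n k x. \<pi> z) \<ge> 0" using pos by (intro sum_nonneg) (auto intro: less_imp_le)
      then show "gibbs \<pi> (Os0 n k) x y \<ge> 0"
        using Os0_block[OF k x] pos y by (simp add: gibbs_def less_imp_le)
    qed
  qed
  also have "\<dots> = \<alpha> * KL n \<pi> P (Pi_mat \<pi>)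
           - (1 - \<alpha>) * ((\<Sum>i=1..k-1. \<pi> i * ln (\<pi> i))
                        + (\<Sum>j=k..n. \<pi> j) * ln (\<Sum>j=k..n. \<pi> j))"
    unfolding KL_gibbs[OF pos k] by (simp only: mult_minus_right diff_conv_add_uminus)
  finally show ?thesis .
qed

end
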